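(* Let $G$ be a group with finite generating set $S$ that contains an element $g$ of infinite order in its center such that $G/\langle g\rangle$ is not a torsion group. Then there is a snake embedding from $(\mathbb{Z}^2,\{a,b\})$ into $(G,S\cup\{g\})$, where $\{a,b\}$ is the standard generating set of $\mathbb{Z}^2$.
   Context: A group is torsion if every element has finite order. An invertible-reversible transducer is a tuple $\mathcal M=(Q,S',T',q_0,\delta,\eta)$ with $Q$ a finite set of states, $q_0\in Q$, $\delta:Q\times S'\to Q$, $\eta:Q\times S'\to T'$ with $\eta(q,\cdot)$ injective for every $q$, and such that for all $q\in Q$, $s\in S'$ there is a unique $q'$ with $\delta(q',s)=q$. One extends by $\eta(q,s^{-1})=\eta(q',s)^{-1}$ and $\delta(q,s^{-1})=q'$ where $\delta(q',s)=q$. For a word $w$, $q_w$ is the state reached from $q_0$ after reading $w$, and $f_{\mathcal M}(\epsilon)=\epsilon$, $f_{\mathcal M}(ws^{\pm1})=f_{\mathcal M}(w)\eta(q_w,s^{\pm1})$. For groups $(K,S')$, $(H,T')$ with finite generating sets, a map $\phi:K\to H$ is a snake embedding if there is such a transducer with $\phi(k)=\overline{f_{\mathcal M}(w)}$ for every word $w$ over $S'\cup S'^{-1}$ representing $k$, and $f_{\mathcal M}(w)=_H f_{\mathcal M}(w')$ iff $w=_K w'$. *)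

theory Defs
  imports "HOL-Algebra.Algebra"
begin

definition torsion_group :: "('a, 'b) monoid_scheme \<Rightarrow> bool" where
  "torsion_group G \<longleftrightarrow> (\<forall>x\<in>carrier G. \<exists>n::nat. n > 0 \<and> x [^]\<^bsub>G\<^esub> n = \<one>\<^bsub>G\<^esub>)"

text \<open>Words over S \<union> S^-1: a letter (s, True) stands for s, (s, False) for s^-1.\<close>
definition words :: "'a set \<Rightarrow> ('a \<times> bool) list set" where
  "words S = lists (S \<times> UNIV)"

fun eval_word :: "('a, 'b) monoid_scheme \<Rightarrow> ('a \<times> bool) list \<Rightarrow> 'a" where
  "eval_word G [] = \<one>\<^bsub>G\<^esub>"
| "eval_word G ((s, True) # w) = s \<otimes>\<^bsub>G\<^esub> eval_word G w"
| "eval_word G ((s, False) # w) = inv\<^bsub>G\<^esub> s \<otimes>\<^bsub>G\<^esub> eval_word G w"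

definition inv_rev_transducer ::
  "'q set \<Rightarrow> 'a set \<Rightarrow> 'b set \<Rightarrow> 'q \<Rightarrow> ('q \<Rightarrow> 'a \<Rightarrow> 'q) \<Rightarrow> ('q \<Rightarrow> 'a \<Rightarrow> 'b) \<Rightarrow> bool" where
  "inv_rev_transducer Q S' T' q0 \<delta> \<eta> \<longleftrightarrow>
     finite Q \<and> q0 \<in> Q \<and>
     (\<forall>q\<in>Q. \<forall>s\<in>S'. \<delta> q s \<in> Q \<and> \<eta> q s \<in> T') \<and>
     (\<forall>q\<in>Q. inj_on (\<eta> q) S') \<and>
     (\<forall>q\<in>Q. \<forall>s\<in>S'. \<exists>!q'. q' \<in> Q \<and> \<delta> q' s = q)"

text \<open>Extension of delta to inverse letters: delta(q, s^-1) = the q' with delta(q', s) = q.\<close>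
definition delta_inv :: "'q set \<Rightarrow> ('q \<Rightarrow> 'a \<Rightarrow> 'q) \<Rightarrow> 'q \<Rightarrow> 'a \<Rightarrow> 'q" where
  "delta_inv Q \<delta> q s = (THE q'. q' \<in> Q \<and> \<delta> q' s = q)"

fun tr_step :: "'q set \<Rightarrow> ('q \<Rightarrow> 'a \<Rightarrow> 'q) \<Rightarrow> 'q \<Rightarrow> 'a \<times> bool \<Rightarrow> 'q" where
  "tr_step Q \<delta> q (s, True) = \<delta> q s"
| "tr_step Q \<delta> q (s, False) = delta_inv Q \<delta> q s"

fun tr_out :: "'q set \<Rightarrow> ('q \<Rightarrow> 'a \<Rightarrow> 'q) \<Rightarrow> ('q \<Rightarrow> 'a \<Rightarrow> 'b) \<Rightarrow> 'q \<Rightarrow> 'a \<times> bool \<Rightarrow> 'b \<times> bool" where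
  "tr_out Q \<delta> \<eta> q (s, True) = (\<eta> q s, True)"
| "tr_out Q \<delta> \<eta> q (s, False) = (\<eta> (delta_inv Q \<delta> q s) s, False)"

text \<open>State q_w reached from q0 after reading w.\<close>
definition tr_state :: "'q set \<Rightarrow> 'q \<Rightarrow> ('q \<Rightarrow> 'a \<Rightarrow> 'q) \<Rightarrow> ('a \<times> bool) list \<Rightarrow> 'q" where
  "tr_state Q q0 \<delta> w = foldl (tr_step Q \<delta>) q0 w"

text \<open>f_M(epsilon) = epsilon, f_M(w x) = f_M(w) eta(q_w, x); i.e. the i-th output letter is
  eta(q_{w[0..i)}, w_i).\<close>
definition tr_fun :: "'q set \<Rightarrow> 'q \<Rightarrow> ('q \<Rightarrow> 'a \<Rightarrow> 'q) \<Rightarrow> ('q \<Rightarrow> 'a \<Rightarrow> 'b)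
                \<Rightarrow> ('a \<times> bool) list \<Rightarrow> ('b \<times> bool) list" where
  "tr_fun Q q0 \<delta> \<eta> w =
     map (\<lambda>i. tr_out Q \<delta> \<eta> (tr_state Q q0 \<delta> (take i w)) (w ! i)) [0..<length w]"

text \<open>Snake embedding (K, S') \<rightarrow> (H, T'). States are represented as a finite set of naturals
  (no loss of generality).\<close>
definition snake_embedding ::
  "('a, 'c) monoid_scheme \<Rightarrow> 'a set \<Rightarrow> ('b, 'd) monoid_scheme \<Rightarrow> 'b set \<Rightarrow> ('a \<Rightarrow> 'b) \<Rightarrow> bool" where
  "snake_embedding K S' H T' \<phi> \<longleftrightarrow>
     (\<exists>(Q::nat set) q0 \<delta> \<eta>. inv_rev_transducer Q S' T' q0 \<delta> \<eta> \<and>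
        (\<forall>k\<in>carrier K. \<forall>w\<in>words S'. eval_word K w = k \<longrightarrow>
             \<phi> k = eval_word H (tr_fun Q q0 \<delta> \<eta> w)) \<and>
        (\<forall>w\<in>words S'. \<forall>w'\<in>words S'.
             eval_word H (tr_fun Q q0 \<delta> \<eta> w) = eval_word H (tr_fun Q q0 \<delta> \<eta> w')
             \<longleftrightarrow> eval_word K w = eval_word K w'))"

definition Z2 :: "(int \<times> int) monoid" where
  "Z2 = \<lparr>carrier = UNIV, monoid.mult = (\<lambda>x y. (fst x + fst y, snd x + snd y)), monoid.one = (0, 0)\<rparr>"

end

theory Submission imports Defs begin

locale snk = group G for G :: "('g,'c) monoid_scheme" (structure) +
  fixes g :: 'g and S :: "'g set"
  assumes g_carr: "g \<in> carrier G"
    and g_inf: "\<forall>n::nat. n > 0 \<longrightarrow> g [^] n \<noteq> \<one>"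
    and g_cent: "\<forall>x\<in>carrier G. g \<otimes> x = x \<otimes> g"
    and S_sub: "S \<subseteq> carrier G"
begin

definition "Hg = generate G {g}"

lemma Hg_eq: "Hg = {g [^] (k::int) | k. k \<in> UNIV}"
  unfolding Hg_def using generate_pow[OF g_carr] .

lemma Hg_sub: "subgroup Hg G"
  unfolding Hg_def using generate_is_subgroup g_carr by auto

lemma Hg_carr: "y \<in> Hg \<Longrightarrow> y \<in> carrier G"
  by (rule subgroup.mem_carrier[OF Hg_sub])

lemma gpow_in: "g [^] (i::int) \<in> Hg"
  using Hg_eq by auto

lemma comm_inv: assumes "a \<in> carrier G" "x \<in> carrier G" "a \<otimes> x = x \<otimes> a"
  shows "inv a \<otimes> x = x \<otimes> inv a"
proof -
  have 1: "inv a \<otimes> (a \<otimes> x) = x" using assms(1,2) by (simp add: m_assoc[symmetric])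
  have 2: "(x \<otimes> a) \<otimes> inv a = x" using assms(1,2) by (simp add: m_assoc)
  have "inv a \<otimes> x = inv a \<otimes> ((x \<otimes> a) \<otimes> inv a)" using 2 by simp
  also have "\<dots> = (inv a \<otimes> (x \<otimes> a)) \<otimes> inv a"
    by (rule m_assoc[symmetric]) (use assms in auto)
  also have "\<dots> = (inv a \<otimes> (a \<otimes> x)) \<otimes> inv a" by (simp only: assms(3))
  also have "\<dots> = x \<otimes> inv a" by (simp only: 1)
  finally show ?thesis .
qed

lemma gpow_cent: "x \<in> carrier G \<Longrightarrow> g [^] (i::int) \<otimes> x = x \<otimes> g [^] i"
proof -
  assume x: "x \<in> carrier G"
  have n: "g [^] (n::nat) \<otimes> x = x \<otimes> g [^] n" for n
    using group_commutes_pow g_cent g_carr x by auto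
  show ?thesis
  proof (cases "i < 0")
    case True
    have "inv (g [^] nat (-i)) \<otimes> x = x \<otimes> inv (g [^] nat (-i))"
      using n[of "nat (-i)"] x g_carr by (intro comm_inv) auto
    moreover have "g [^] i = inv (g [^] nat (-i))"
    proof -
      have "g [^] i = inv (g [^] (-i))" using int_pow_neg[OF g_carr, of "-i"] by simp
      moreover have "g [^] nat (-i) = g [^] (-i)" using True by (intro pow_nat) simp
      ultimately show ?thesis by simp
    qed
    ultimately show ?thesis by simp
  next
    case False
    then have "g [^] nat i = g [^] i" by (intro pow_nat) simp
    then show ?thesis using n[of "nat i"] by simp
  qed
qed

lemma Hg_cent: "y \<in> Hg \<Longrightarrow> x \<in> carrier G \<Longrightarrow> y \<otimes> x = x \<otimes> y"
  using Hg_eq gpow_cent by auto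

lemma Hg_normal: "Hg \<lhd> G"
proof (rule normalI[OF Hg_sub], intro ballI)
  fix x assume x: "x \<in> carrier G"
  show "Hg #> x = x <# Hg"
    unfolding r_coset_def l_coset_def using Hg_cent[OF _ x] by blast
qed

definition nt :: "'g \<Rightarrow> bool" where
  "nt x \<longleftrightarrow> x \<in> carrier G \<and> (\<forall>i::int. i \<noteq> 0 \<longrightarrow> x [^] i \<notin> Hg)"

lemma nt_nat: assumes "x \<in> carrier G" "\<forall>n::nat. n > 0 \<longrightarrow> x [^] n \<notin> Hg" shows "nt x"
  unfolding nt_def
proof (intro conjI assms allI impI)
  fix i :: int assume i: "i \<noteq> 0"
  show "x [^] i \<notin> Hg"
  proof (cases "i < 0")
    case True
    have "nat (-i) > 0" using True by simp
    then have "x [^] nat (-i) \<notin> Hg" using assms(2) by blast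
    moreover have "x [^] nat (-i) = x [^] (-i)" using True by (intro pow_nat) simp
    ultimately have "x [^] (-i) \<notin> Hg" by simp
    then show ?thesis using True Hg_sub subgroup.m_inv_closed int_pow_neg[OF assms(1), of i]
      by fastforce
  next
    case False
    then have "nat i > 0" using i by simp
    then have "x [^] nat i \<notin> Hg" using assms(2) by blast
    moreover have "x [^] nat i = x [^] i" using False by (intro pow_nat) simp
    ultimately show ?thesis by simp
  qed
qed

lemma nt_pow: "nt x \<Longrightarrow> c \<noteq> 0 \<Longrightarrow> nt (x [^] (c::int))"
  unfolding nt_def by (auto simp: int_pow_pow)

lemma nt_gmult: assumes "nt x" shows "nt (g [^] (d::int) \<otimes> x)"
  unfolding nt_def
proof (intro conjI allI impI)
  have x: "x \<in> carrier G" using assms nt_def by auto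
  then show "g [^] d \<otimes> x \<in> carrier G" using g_carr by auto
  fix i :: int assume i: "i \<noteq> 0"
  have "(g [^] d \<otimes> x) [^] i = (g [^] d) [^] i \<otimes> x [^] i"
    using int_pow_mult_distrib gpow_cent x g_carr by auto
  also have "\<dots> = g [^] (d*i) \<otimes> x [^] i" using g_carr int_pow_pow by auto
  finally have e: "(g [^] d \<otimes> x) [^] i = g [^] (d*i) \<otimes> x [^] i" .
  show "(g [^] d \<otimes> x) [^] i \<notin> Hg"
  proof
    assume "(g [^] d \<otimes> x) [^] i \<in> Hg"
    then have "inv (g [^] (d*i)) \<otimes> (g [^] (d*i) \<otimes> x [^] i) \<in> Hg"
      using e gpow_in Hg_sub subgroup.m_inv_closed subgroup.m_closed by metis
    then have "x [^] i \<in> Hg" using x g_carr by (simp add: m_assoc[symmetric])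
    then show False using assms i nt_def by auto
  qed
qed

lemma canc_r: "a \<in> carrier G \<Longrightarrow> y \<in> carrier G \<Longrightarrow> a \<otimes> y \<otimes> inv y = a"
  by (simp add: m_assoc)

lemma canc_l: "a \<in> carrier G \<Longrightarrow> y \<in> carrier G \<Longrightarrow> a \<otimes> inv y \<otimes> y = a"
  by (simp add: m_assoc)

lemma conj_pow_nat: "x \<in> carrier G \<Longrightarrow> y \<in> carrier G \<Longrightarrow>
   (inv y \<otimes> x \<otimes> y) [^] (n::nat) = inv y \<otimes> x [^] n \<otimes> y"
proof (induction n)
  case 0 then show ?case by simp
next
  case (Suc n)
  have "(inv y \<otimes> x \<otimes> y) [^] Suc n = (inv y \<otimes> x [^] n \<otimes> y) \<otimes> (inv y \<otimes> x \<otimes> y)"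
    using Suc by simp
  also have "\<dots> = inv y \<otimes> x [^] Suc n \<otimes> y" using Suc by (simp add: m_assoc[symmetric] canc_r)
  finally show ?case .
qed

lemma nt_carr: "nt x \<Longrightarrow> x \<in> carrier G" unfolding nt_def by auto

lemma nt_natD: "nt x \<Longrightarrow> n > 0 \<Longrightarrow> x [^] (n::nat) \<notin> Hg"
  unfolding nt_def by (metis int_pow_int of_nat_0_less_iff less_irrefl)

lemma nt_conj: assumes "nt x" "y \<in> carrier G" shows "nt (inv y \<otimes> x \<otimes> y)"
proof (rule nt_nat)
  have x: "x \<in> carrier G" using assms nt_carr by auto
  then show "inv y \<otimes> x \<otimes> y \<in> carrier G" using assms by auto
  show "\<forall>n::nat. n > 0 \<longrightarrow> (inv y \<otimes> x \<otimes> y) [^] n \<notin> Hg"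
  proof (intro allI impI notI)
    fix n :: nat assume n: "n > 0" and h: "(inv y \<otimes> x \<otimes> y) [^] n \<in> Hg"
    define hh where "hh = inv y \<otimes> x [^] n \<otimes> y"
    have hh: "hh \<in> Hg" using h conj_pow_nat[OF x assms(2)] hh_def by simp
    have "x [^] n = y \<otimes> hh \<otimes> inv y" unfolding hh_def using x assms(2)
      by (simp add: m_assoc[symmetric] canc_r)
    also have "\<dots> = hh" using Hg_cent[OF hh assms(2)] assms(2) Hg_carr[OF hh] canc_r by metis
    finally show False using hh nt_natD[OF assms(1) n] by simp
  qed
qed

definition wv :: "'g list \<Rightarrow> 'g" where
  "wv L = foldr (\<lambda>x y. x \<otimes> y) L \<one>"

lemma wv_simps[simp]: "wv [] = \<one>" "wv (x # L) = x \<otimes> wv L"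
  unfolding wv_def by auto

lemma wv_carr[simp]: "set L \<subseteq> carrier G \<Longrightarrow> wv L \<in> carrier G"
  by (induction L) auto

lemma wv_append: "set A \<subseteq> carrier G \<Longrightarrow> set B \<subseteq> carrier G \<Longrightarrow> wv (A @ B) = wv A \<otimes> wv B"
  by (induction A) (auto simp: m_assoc)

lemma wv_rep: "s \<in> carrier G \<Longrightarrow> wv (replicate n s) = s [^] n"
  by (induction n) (simp_all, metis nat_pow_Suc nat_pow_Suc2)

lemma notnt_nat: "x \<in> carrier G \<Longrightarrow> \<not> nt x \<Longrightarrow> \<exists>n::nat. n > 0 \<and> x [^] n \<in> Hg"
  using nt_nat by blast

lemma one_not_nt: "\<not> nt \<one>"
  using nt_natD[of "\<one>" 1] Hg_sub subgroup.one_closed by fastforce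

lemma pos_word:
  assumes gen: "generate G S = carrier G" and x: "nt x"
  shows "\<exists>L. set L \<subseteq> S \<and> nt (wv L)"
proof (rule ccontr)
  assume A: "\<not> (\<exists>L. set L \<subseteq> S \<and> nt (wv L))"
  have SC: "set L \<subseteq> S \<Longrightarrow> set L \<subseteq> carrier G" for L using S_sub by auto
  have claim: "\<exists>L i. set L \<subseteq> S \<and> y = wv L \<otimes> g [^] (i::int)" if "y \<in> generate G S" for y
    using that
  proof (induction rule: generate.induct)
    case one
    show ?case by (rule exI[of _ "[]"], rule exI[of _ 0], simp)
  next
    case (incl s)
    then show ?case using S_sub by (intro exI[of _ "[s]"] exI[of _ 0]) auto
  next
    case (inv s)
    have s: "s \<in> carrier G" using inv S_sub by auto
    have "wv [s] = s" using s by simp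
    then have "\<not> nt s" using A inv by (metis empty_set empty_subsetI insert_subset list.simps(15))
    then obtain n :: nat where n: "n > 0" "s [^] n \<in> Hg" using notnt_nat s by blast
    then obtain j where j: "s [^] n = g [^] (j::int)" using Hg_eq by auto
    define y where "y = s [^] (n - 1) \<otimes> g [^] (-j)"
    have e1: "y \<otimes> s = s [^] (n - 1) \<otimes> s \<otimes> g [^] (-j)" unfolding y_def
      using s g_carr gpow_cent[OF s] by (simp add: m_assoc)
    have e2: "s [^] (n - 1) \<otimes> s = s [^] n" using n(1) s
      by (metis Suc_diff_1 nat_pow_Suc)
    have e3: "g [^] j \<otimes> g [^] (-j) = \<one>" using g_carr int_pow_mult[OF g_carr, of j "-j", symmetric] by simp
    have "y \<otimes> s = \<one>" using e1 e2 e3 j by simp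
    then have "inv s = y" using s y_def g_carr by (intro inv_equality) auto
    then show ?case unfolding y_def using wv_rep[OF s] inv
      by (intro exI[of _ "replicate (n - 1) s"] exI[of _ "-j"]) auto
  next
    case (eng a b)
    then obtain L1 i1 L2 i2 where e: "set L1 \<subseteq> S" "a = wv L1 \<otimes> g [^] (i1::int)"
      "set L2 \<subseteq> S" "b = wv L2 \<otimes> g [^] (i2::int)" by blast
    have c1: "wv L1 \<in> carrier G" "wv L2 \<in> carrier G" using e SC by auto
    have "a \<otimes> b = wv L1 \<otimes> (g [^] i1 \<otimes> wv L2) \<otimes> g [^] i2"
      using e c1 g_carr by (simp add: m_assoc)
    also have "\<dots> = wv L1 \<otimes> wv L2 \<otimes> (g [^] i1 \<otimes> g [^] i2)"
      using gpow_cent[OF c1(2)] c1 g_carr by (simp add: m_assoc)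
    also have "\<dots> = wv (L1 @ L2) \<otimes> g [^] (i1 + i2)"
      using wv_append SC e c1 g_carr int_pow_mult by simp
    finally show ?case using e by (intro exI[of _ "L1 @ L2"] exI[of _ "i1 + i2"]) auto
  qed
  have "x \<in> generate G S" using gen nt_carr[OF x] by simp
  then obtain L i where L: "set L \<subseteq> S" "x = wv L \<otimes> g [^] (i::int)" using claim by blast
  have cL: "wv L \<in> carrier G" using L SC by auto
  have e: "g [^] (-i) \<otimes> g [^] i = \<one>" using int_pow_mult[OF g_carr, of "-i" i, symmetric] by simp
  have "g [^] (-i) \<otimes> x = (g [^] (-i) \<otimes> wv L) \<otimes> g [^] i"
    using L(2) cL g_carr by (simp add: m_assoc)
  also have "\<dots> = wv L \<otimes> (g [^] (-i) \<otimes> g [^] i)"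
    using gpow_cent[OF cL, of "-i"] cL g_carr by (simp add: m_assoc)
  also have "\<dots> = wv L" using e cL by simp
  finally have "g [^] (-i) \<otimes> x = wv L" .
  then have "nt (wv L)" using nt_gmult[OF x, of "-i"] by simp
  then show False using A L by blast
qed

end

locale snk2 = snk G g S for G :: "('g,'c) monoid_scheme" (structure) and g S +
  fixes L :: "'g list"
  assumes L_S: "set L \<subseteq> S" and L_nt: "nt (wv L)"
    and L_min: "\<forall>L'. set L' \<subseteq> S \<longrightarrow> nt (wv L') \<longrightarrow> length L \<le> length L'"
begin

lemma L_carr: "set L \<subseteq> carrier G" using L_S S_sub by auto

lemma L_ne: "L \<noteq> []" using L_nt one_not_nt by auto

lemma remove:
  assumes "L = A @ B @ C" "B \<noteq> []" "wv B \<in> Hg"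
  shows False
proof -
  have c: "set A \<subseteq> carrier G" "set B \<subseteq> carrier G" "set C \<subseteq> carrier G"
    using L_carr assms by auto
  obtain j where j: "wv B = g [^] (j::int)" using assms(3) Hg_eq by auto
  have "wv L = wv A \<otimes> wv B \<otimes> wv C" using assms c wv_append by (simp add: m_assoc)
  also have "\<dots> = g [^] j \<otimes> wv A \<otimes> wv C"
    using j c gpow_cent[of "wv A" j] by simp
  also have "\<dots> = g [^] j \<otimes> wv (A @ C)"
    using c g_carr wv_append by (simp add: m_assoc)
  finally have "g [^] (-j) \<otimes> wv L = wv (A @ C)"
    using c g_carr by (simp add: m_assoc[symmetric] int_pow_mult[symmetric])
  then have "nt (wv (A @ C))" using nt_gmult[OF L_nt, of "-j"] by simp
  moreover have "set (A @ C) \<subseteq> S" using L_S assms by auto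
  ultimately have "length L \<le> length (A @ C)" using L_min by blast
  then show False using assms by simp
qed

lemma letter_notin: "q < length L \<Longrightarrow> L ! q \<notin> Hg"
  using L_carr[THEN subsetD, OF nth_mem[of q L]] remove[of "take q L" "[L ! q]" "drop (Suc q) L"] L_carr id_take_nth_drop[of q L]
  by (auto simp: nth_mem)

definition "kk = length L"
definition "dl q (s::int\<times>int) = (if s = (1,0) then q else Suc q mod kk)"
definition "et q (s::int\<times>int) = (if s = (1,0) then g else L ! (q mod kk))"
definition "QQ = {..<kk}"
definition "P r = wv (take r L)"
definition "hh = wv L"
definition "Phi (mn::int\<times>int) = g [^] (fst mn) \<otimes> hh [^] (snd mn div int kk) \<otimes> P (nat (snd mn mod int kk))"

lemma kk_pos: "kk > 0" using L_ne kk_def by auto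

lemma P_carr[simp]: "P r \<in> carrier G" unfolding P_def using L_carr
  by (meson order.trans set_take_subset wv_carr)

lemma hh_carr[simp]: "hh \<in> carrier G" unfolding hh_def using L_carr by simp

lemma L_nth_carr[simp]: "L ! (q mod kk) \<in> carrier G"
  using L_carr kk_pos kk_def by (auto simp: nth_mem subset_iff)

lemma et_carr[simp]: "et q s \<in> carrier G" unfolding et_def using g_carr by auto

lemma P_Suc: "r < kk \<Longrightarrow> P (Suc r) = P r \<otimes> L ! r"
proof -
  assume r: "r < kk"
  have c1: "set (take r L) \<subseteq> carrier G" using L_carr set_take_subset by (metis order.trans)
  have c2: "set [L ! r] \<subseteq> carrier G" using L_carr r nth_mem unfolding kk_def by auto
  have "take (Suc r) L = take r L @ [L ! r]" using r unfolding kk_def by (simp add: take_Suc_conv_app_nth)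
  then show ?thesis unfolding P_def using wv_append[OF c1 c2] c2 by simp
qed

lemma P_kk: "P kk = hh" unfolding P_def hh_def kk_def by simp

lemma P_0: "P 0 = \<one>" unfolding P_def by simp

lemma Phi_eq: "r < kk \<Longrightarrow> Phi (m, int kk * q + int r) = g [^] m \<otimes> hh [^] q \<otimes> P r"
proof -
  assume r: "r < kk"
  have "(int kk * q + int r) div int kk = q" using r kk_pos by simp
  moreover have "(int kk * q + int r) mod int kk = int r" using r kk_pos by simp
  ultimately show ?thesis unfolding Phi_def by simp
qed

end

lemma tr_state_snoc: "tr_state Q q0 \<delta> (w @ [x]) = tr_step Q \<delta> (tr_state Q q0 \<delta> w) x"
  unfolding tr_state_def by simp

lemma tr_fun_snoc: "tr_fun Q q0 \<delta> \<eta> (w @ [x]) = tr_fun Q q0 \<delta> \<eta> w @ [tr_out Q \<delta> \<eta> (tr_state Q q0 \<delta> w) x]"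
  unfolding tr_fun_def by (auto simp: nth_append)

lemma (in group) eval_word_append:
  "fst ` set u \<subseteq> carrier G \<Longrightarrow> fst ` set v \<subseteq> carrier G \<Longrightarrow>
   eval_word G (u @ v) = eval_word G u \<otimes> eval_word G v"
proof (induction u)
  case Nil
  have "eval_word G v \<in> carrier G" using Nil(2)
  proof (induction v)
    case (Cons x v) then show ?case by (cases x; cases "snd x") auto
  qed simp
  then show ?case by simp
next
  case (Cons x u)
  have c: "eval_word G w \<in> carrier G" if "fst ` set w \<subseteq> carrier G" for w
    using that
  proof (induction w)
    case (Cons y w) then show ?case by (cases y; cases "snd y") auto
  qed simp
  obtain s b where x: "x = (s, b)" by force
  have s: "s \<in> carrier G" using Cons x by auto
  show ?case using Cons c s x by (cases b) (auto simp: m_assoc)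
qed

lemma (in group) eval_word_single[simp]:
  "s \<in> carrier G \<Longrightarrow> eval_word G [(s, True)] = s"
  "s \<in> carrier G \<Longrightarrow> eval_word G [(s, False)] = inv s"
  by auto

lemma Z2_group: "group Z2"
  unfolding Z2_def
  by (rule groupI) (auto, (metis add.left_inverse)+)

lemma Z2_inv: "inv\<^bsub>Z2\<^esub> x = (- fst x, - snd x)"
  by (rule group.inv_equality[OF Z2_group]) (auto simp: Z2_def)

lemma Z2_snoc:
  "eval_word Z2 (w @ [(s, True)]) = (fst (eval_word Z2 w) + fst s, snd (eval_word Z2 w) + snd s)"
  "eval_word Z2 (w @ [(s, False)]) = (fst (eval_word Z2 w) - fst s, snd (eval_word Z2 w) - snd s)"
  using group.eval_word_append[OF Z2_group, of w] Z2_inv[of s]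
  by (auto simp: Z2_def)

context snk2 begin

lemma sucmod: "q < kk \<Longrightarrow> Suc q mod kk = (if Suc q = kk then 0 else Suc q)"
  by auto

lemma predmod: "q < kk \<Longrightarrow> (q + kk - 1) mod kk = (if q = 0 then kk - 1 else q - 1)"
proof -
  assume q: "q < kk"
  show ?thesis
  proof (cases "q = 0")
    case True then show ?thesis using kk_pos by simp
  next
    case False
    then have "q + kk - 1 = (q - 1) + kk" by simp
    then show ?thesis using False q by (simp del: add_diff_assoc2)
  qed
qed

lemma g_in_Hg: "g \<in> Hg" using gpow_in[of 1] g_carr by simp

lemma ab_ne: "((1::int), (0::int)) \<noteq> (0, 1)" by simp

lemma uniq_b: "q < kk \<Longrightarrow> q' < kk \<Longrightarrow> Suc q' mod kk = q \<longleftrightarrow> q' = (q + kk - 1) mod kk"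
  using sucmod[of q'] predmod[of q] kk_pos by (auto split: if_splits)

lemma transducer: "inv_rev_transducer QQ {(1,0),(0,1)} (S \<union> {g}) 0 dl et"
proof -
  have A: "finite QQ" unfolding QQ_def by simp
  have B: "0 \<in> QQ" unfolding QQ_def using kk_pos by simp
  have C: "dl q s \<in> QQ \<and> et q s \<in> S \<union> {g}" if q: "q \<in> QQ" and s: "s \<in> {(1,0),(0,1)}" for q s
  proof -
    have qk: "q < kk" using q unfolding QQ_def by simp
    have Lq: "L ! q \<in> S" using L_S qk nth_mem[of q L] unfolding kk_def by auto
    show ?thesis using s qk kk_pos Lq unfolding dl_def et_def QQ_def by auto
  qed
  have D: "inj_on (et q) {(1,0),(0,1)}" if q: "q \<in> QQ" for q
  proof -
    have qk: "q < kk" using q unfolding QQ_def by simp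
    have "g \<noteq> L ! q" using letter_notin[of q] qk g_in_Hg unfolding kk_def by auto
    then show ?thesis unfolding et_def inj_on_def using qk by auto
  qed
  have E: "\<exists>!q'. q' \<in> QQ \<and> dl q' s = q" if q: "q \<in> QQ" and s: "s \<in> {(1,0),(0,1)}" for q s
  proof (cases "s = (1,0)")
    case True then show ?thesis using q unfolding dl_def by auto
  next
    case False
    have qk: "q < kk" using q unfolding QQ_def by simp
    have "s = (0,1)" using s False by auto
    then show ?thesis using qk uniq_b False unfolding dl_def QQ_def
      by (intro ex1I[of _ "(q + kk - 1) mod kk"]) (auto simp: kk_pos)
  qed
  have C': "\<forall>q\<in>QQ. \<forall>s\<in>{(1,0),(0,1)}. dl q s \<in> QQ \<and> et q s \<in> S \<union> {g}" using C by blast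
  have D': "\<forall>q\<in>QQ. inj_on (et q) {(1,0),(0,1)}" using D by blast
  have E': "\<forall>q\<in>QQ. \<forall>s\<in>{(1,0),(0,1)}. \<exists>!q'. q' \<in> QQ \<and> dl q' s = q" using E by blast
  show ?thesis unfolding inv_rev_transducer_def by (intro conjI A B C' D' E')
qed

lemma dinv_a: "q \<in> QQ \<Longrightarrow> delta_inv QQ dl q (1,0) = q"
  unfolding delta_inv_def dl_def by (rule the_equality) auto

lemma dinv_b: "q \<in> QQ \<Longrightarrow> delta_inv QQ dl q (0,1) = (q + kk - 1) mod kk"
  unfolding delta_inv_def dl_def QQ_def
  by (rule the_equality) (use uniq_b kk_pos in auto)

end

context snk2 begin

lemma gm_carr[simp]: "g [^] (m::int) \<in> carrier G" using g_carr by simp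
lemma hq_carr[simp]: "hh [^] (q::int) \<in> carrier G" by simp
lemma Lr_carr[simp]: "r < kk \<Longrightarrow> L ! r \<in> carrier G"
  using L_carr nth_mem[of r L] unfolding kk_def by auto

lemma swap_r: "a \<in> carrier G \<Longrightarrow> Xc \<in> carrier G \<Longrightarrow> c \<in> carrier G \<Longrightarrow> Xc \<otimes> c = c \<otimes> Xc
   \<Longrightarrow> a \<otimes> Xc \<otimes> c = a \<otimes> c \<otimes> Xc"
  by (metis m_assoc)

lemma Phi_eq2: "r < kk \<Longrightarrow> Phi (m, int kk * q + int r) = g [^] m \<otimes> (hh [^] q \<otimes> P r)"
  using Phi_eq by (simp add: m_assoc)

lemma stepA1: "r < kk \<Longrightarrow> Phi (m, int kk * q + int r) \<otimes> g = Phi (m + 1, int kk * q + int r)"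
proof -
  assume r: "r < kk"
  have Xc: "hh [^] q \<otimes> P r \<in> carrier G" by simp
  have "g [^] m \<otimes> (hh [^] q \<otimes> P r) \<otimes> g = g [^] m \<otimes> g \<otimes> (hh [^] q \<otimes> P r)"
    by (rule swap_r) (use g_cent g_carr Xc in auto)
  also have "g [^] m \<otimes> g = g [^] (m + 1)" using int_pow_mult[OF g_carr, of m 1] g_carr by simp
  finally show ?thesis using Phi_eq2[OF r, of m q] Phi_eq2[OF r, of "m+1" q] by simp
qed

lemma stepA2: "r < kk \<Longrightarrow> Phi (m, int kk * q + int r) \<otimes> inv g = Phi (m - 1, int kk * q + int r)"
proof -
  assume r: "r < kk"
  have Xc: "hh [^] q \<otimes> P r \<in> carrier G" by simp
  have c: "(hh [^] q \<otimes> P r) \<otimes> inv g = inv g \<otimes> (hh [^] q \<otimes> P r)"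
    using comm_inv[OF g_carr Xc] g_cent Xc by simp
  have "g [^] m \<otimes> (hh [^] q \<otimes> P r) \<otimes> inv g = g [^] m \<otimes> inv g \<otimes> (hh [^] q \<otimes> P r)"
    by (rule swap_r) (use c g_carr Xc in auto)
  also have "g [^] m \<otimes> inv g = g [^] (m - 1)" using int_pow_diff[OF g_carr, of m 1] g_carr by simp
  finally show ?thesis using Phi_eq2[OF r, of m q] Phi_eq2[OF r, of "m-1" q] by simp
qed

lemma hpow_Suc: "hh [^] (q + 1) = hh [^] (q::int) \<otimes> hh"
  using int_pow_mult[OF hh_carr, of q 1] by simp

lemma stepB1: "r < kk \<Longrightarrow> Phi (m, int kk * q + int r) \<otimes> L ! r = Phi (m, int kk * q + int r + 1)"
proof -
  assume r: "r < kk"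
  have "Phi (m, int kk * q + int r) \<otimes> L ! r = g [^] m \<otimes> hh [^] q \<otimes> (P r \<otimes> L ! r)"
    using Phi_eq[OF r, of m q] r by (simp add: m_assoc)
  also have "\<dots> = g [^] m \<otimes> hh [^] q \<otimes> P (Suc r)" using P_Suc[OF r] by simp
  also have "\<dots> = Phi (m, int kk * q + int r + 1)"
  proof (cases "Suc r < kk")
    case True
    have n: "int kk * q + int r + 1 = int kk * q + int (Suc r)" by simp
    show ?thesis by (simp only: n Phi_eq[OF True])
  next
    case False
    then have k: "Suc r = kk" using r by simp
    have "int kk * q + int r + 1 = int kk * (q + 1) + int 0" using k by (simp add: algebra_simps)
    then have "Phi (m, int kk * q + int r + 1) = g [^] m \<otimes> hh [^] (q + 1) \<otimes> P 0"
      using Phi_eq[of 0 m "q+1"] kk_pos by simp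
    then show ?thesis using k P_kk P_0 hpow_Suc by (simp add: m_assoc)
  qed
  finally show ?thesis .
qed

lemma stepB2: "r < kk \<Longrightarrow> Phi (m, int kk * q + int r) \<otimes> inv (L ! ((r + kk - 1) mod kk)) = Phi (m, int kk * q + int r - 1)"
proof (cases "r = 0")
  case False
  assume r: "r < kk"
  have e: "(r + kk - 1) mod kk = r - 1" using predmod[OF r] False by simp
  have r1: "r - 1 < kk" "Suc (r - 1) = r" using r False by auto
  have "P r = P (r - 1) \<otimes> L ! (r - 1)" using P_Suc[OF r1(1)] r1(2) by simp
  then have pr: "P r \<otimes> inv (L ! (r - 1)) = P (r - 1)" using r1 by (simp add: m_assoc)
  have n: "int kk * q + int r - 1 = int kk * q + int (r - 1)" using False by simp
  have "Phi (m, int kk * q + int r) \<otimes> inv (L ! ((r + kk - 1) mod kk))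
     = g [^] m \<otimes> hh [^] q \<otimes> (P r \<otimes> inv (L ! (r - 1)))"
    using Phi_eq[OF r, of m q] e r1 by (simp add: m_assoc)
  also have "\<dots> = Phi (m, int kk * q + int r - 1)"
    by (simp only: n Phi_eq[OF r1(1)] pr)
  finally show ?thesis .
next
  case True
  assume r: "r < kk"
  have e: "(r + kk - 1) mod kk = kk - 1" using predmod[OF r] True by simp
  have k1: "kk - 1 < kk" "Suc (kk - 1) = kk" using kk_pos by auto
  have hk: "hh = P (kk - 1) \<otimes> L ! (kk - 1)" using P_Suc[OF k1(1)] k1(2) P_kk by simp
  have "hh [^] q = hh [^] (q - 1) \<otimes> hh" using hpow_Suc[of "q - 1"] by simp
  then have hq: "hh [^] q \<otimes> inv (L ! (kk - 1)) = hh [^] (q - 1) \<otimes> P (kk - 1)"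
    using hk k1 by (simp add: m_assoc)
  have n: "int kk * q + int r - 1 = int kk * (q - 1) + int (kk - 1)" using True kk_pos
    by (simp add: algebra_simps of_nat_diff)
  have "Phi (m, int kk * q + int r) \<otimes> inv (L ! ((r + kk - 1) mod kk))
     = g [^] m \<otimes> (hh [^] q \<otimes> inv (L ! (kk - 1)))"
    using Phi_eq[OF r, of m q] e True P_0 k1 by (simp add: m_assoc)
  also have "\<dots> = Phi (m, int kk * q + int r - 1)"
    using hq n Phi_eq[OF k1(1), of m "q - 1"] by (simp add: m_assoc)
  finally show ?thesis .
qed

end

context snk2 begin

lemma nmod_suc: "nat ((n + 1) mod int kk) = Suc (nat (n mod int kk)) mod kk"
proof -
  have "(n + 1) mod int kk = (n mod int kk + 1) mod int kk" by (simp add: mod_add_left_eq)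
  also have "n mod int kk = int (nat (n mod int kk))" using kk_pos by simp
  also have "int (nat (n mod int kk)) + 1 = int (Suc (nat (n mod int kk)))" by simp
  finally show ?thesis by (metis nat_int of_nat_mod)
qed

lemma nmod_pred: "nat ((n - 1) mod int kk) = (nat (n mod int kk) + kk - 1) mod kk"
proof -
  have "(n - 1) mod int kk = (n mod int kk - 1) mod int kk" by (simp add: mod_diff_left_eq)
  also have "\<dots> = (n mod int kk - 1 + int kk) mod int kk" by simp
  also have "n mod int kk = int (nat (n mod int kk))" using kk_pos by simp
  also have "int (nat (n mod int kk)) - 1 + int kk = int (nat (n mod int kk) + kk - 1)"
    using kk_pos by (simp add: of_nat_diff)
  finally show ?thesis by (metis nat_int of_nat_mod)
qed

lemma ndecomp: "n = int kk * (n div int kk) + int (nat (n mod int kk))" and rlt: "nat (n mod int kk) < kk"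
  using kk_pos by (simp_all add: nat_less_iff)

lemma out_carr: "fst (tr_out QQ dl et q x) \<in> carrier G"
  by (cases x; cases "snd x") auto

lemma tr_fun_carr: "fst ` set (tr_fun QQ 0 dl et w) \<subseteq> carrier G"
proof (rule subsetI)
  fix y assume "y \<in> fst ` set (tr_fun QQ 0 dl et w)"
  then obtain i where "y = fst (tr_out QQ dl et (tr_state QQ 0 dl (take i w)) (w ! i))"
    unfolding tr_fun_def by auto
  then show "y \<in> carrier G" using out_carr by simp
qed

lemma main:
  "w \<in> words {(1,0),(0,1)} \<Longrightarrow> tr_state QQ 0 dl w = nat (snd (eval_word Z2 w) mod int kk) \<and>
     eval_word G (tr_fun QQ 0 dl et w) = Phi (eval_word Z2 w)"
proof (induction w rule: rev_induct)
  case Nil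
  have "eval_word Z2 [] = (0, 0)" by (simp add: Z2_def)
  then show ?case unfolding tr_state_def tr_fun_def Phi_def using P_0 kk_pos by simp
next
  case (snoc x w)
  obtain s b where x: "x = (s, b)" by (metis surj_pair)
  have w: "w \<in> words {(1,0),(0,1)}" and s: "s = (1,0) \<or> s = (0,1)"
    using snoc.prems x unfolding words_def by auto
  obtain m n where mn: "eval_word Z2 w = (m, n)" by force
  define r where "r = nat (n mod int kk)"
  define q where "q = n div int kk"
  have IH: "tr_state QQ 0 dl w = r" "eval_word G (tr_fun QQ 0 dl et w) = Phi (m, n)"
    using snoc.IH[OF w] mn r_def by auto
  have rk: "r < kk" unfolding r_def by (rule rlt)
  have rQ: "r \<in> QQ" using rk QQ_def by simp
  have n: "n = int kk * q + int r" unfolding q_def r_def by (rule ndecomp)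
  have ev: "eval_word G (tr_fun QQ 0 dl et (w @ [x])) =
      Phi (m, n) \<otimes> eval_word G [tr_out QQ dl et r x]"
    using tr_fun_snoc[of QQ 0 dl et w x] IH eval_word_append[OF tr_fun_carr, of "[tr_out QQ dl et r x]" w]
      out_carr[of r x] by auto
  have st: "tr_state QQ 0 dl (w @ [x]) = tr_step QQ dl r x" unfolding tr_state_snoc IH(1) ..
  have fin: "?case" if Z: "eval_word Z2 (w @ [x]) = (m', n')"
    and St: "tr_step QQ dl r x = nat (n' mod int kk)"
    and Val: "Phi (m, n) \<otimes> eval_word G [tr_out QQ dl et r x] = Phi (m', n')" for m' n'
    using Z St Val ev st by simp
  have Lr: "L ! r \<in> carrier G" using rk by simp
  show ?case
  proof (cases "s = (1,0)")
    case True
    show ?thesis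
    proof (cases b)
      case b: True
      have o: "tr_out QQ dl et r x = (g, True)" using x True b et_def by simp
      show ?thesis
      proof (rule fin)
        show "eval_word Z2 (w @ [x]) = (m + 1, n)" using Z2_snoc(1)[of w s] mn x True b by simp
        show "tr_step QQ dl r x = nat (n mod int kk)" using x True b dl_def r_def by simp
        show "Phi (m, n) \<otimes> eval_word G [tr_out QQ dl et r x] = Phi (m + 1, n)"
          using stepA1[OF rk, of m q] o g_carr unfolding n[symmetric] by simp
      qed
    next
      case b: False
      have o: "tr_out QQ dl et r x = (g, False)" using x True b et_def dinv_a[OF rQ] by simp
      show ?thesis
      proof (rule fin)
        show "eval_word Z2 (w @ [x]) = (m - 1, n)" using Z2_snoc(2)[of w s] mn x True b by simp
        show "tr_step QQ dl r x = nat (n mod int kk)" using x True b dinv_a[OF rQ] r_def by simp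
        show "Phi (m, n) \<otimes> eval_word G [tr_out QQ dl et r x] = Phi (m - 1, n)"
          using stepA2[OF rk, of m q] o g_carr unfolding n[symmetric] by simp
      qed
    qed
  next
    case False
    then have s1: "s = (0,1)" using s by simp
    show ?thesis
    proof (cases b)
      case b: True
      have o: "tr_out QQ dl et r x = (L ! r, True)" using x s1 b et_def rk by simp
      show ?thesis
      proof (rule fin)
        show "eval_word Z2 (w @ [x]) = (m, n + 1)" using Z2_snoc(1)[of w s] mn x s1 b by simp
        show "tr_step QQ dl r x = nat ((n + 1) mod int kk)" using x s1 b dl_def nmod_suc[of n]
          unfolding r_def by simp
        show "Phi (m, n) \<otimes> eval_word G [tr_out QQ dl et r x] = Phi (m, n + 1)"
          using stepB1[OF rk, of m q] o Lr unfolding n[symmetric] by simp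
      qed
    next
      case b: False
      have o: "tr_out QQ dl et r x = (L ! ((r + kk - 1) mod kk), False)"
        using x s1 b et_def dinv_b[OF rQ] by simp
      have Lr': "L ! ((r + kk - 1) mod kk) \<in> carrier G" using kk_pos by simp
      show ?thesis
      proof (rule fin)
        show "eval_word Z2 (w @ [x]) = (m, n - 1)" using Z2_snoc(2)[of w s] mn x s1 b by simp
        show "tr_step QQ dl r x = nat ((n - 1) mod int kk)" using x s1 b dinv_b[OF rQ] nmod_pred[of n]
          unfolding r_def by simp
        show "Phi (m, n) \<otimes> eval_word G [tr_out QQ dl et r x] = Phi (m, n - 1)"
          using stepB2[OF rk, of m q] o Lr' unfolding n[symmetric] by simp
      qed
    qed
  qed
qed

end

context snk2 begin

lemma gpow_one: "g [^] (d::int) = \<one> \<Longrightarrow> d = 0"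
proof (rule ccontr)
  assume e: "g [^] d = \<one>" and d: "d \<noteq> 0"
  show False
  proof (cases "d > 0")
    case True
    have "g [^] nat d = g [^] d" using True by (intro pow_nat) simp
    moreover have "nat d > 0" using True by simp
    ultimately show False using g_inf e by metis
  next
    case False
    have "g [^] (-d) = inv (g [^] d)" using int_pow_neg[OF g_carr, of d] by simp
    then have e2: "g [^] (-d) = \<one>" using e by simp
    have "g [^] nat (-d) = g [^] (-d)" using False by (intro pow_nat) simp
    moreover have "nat (-d) > 0" using False d by simp
    ultimately show False using g_inf e2 by metis
  qed
qed

lemma Phi_inj_aux:
  assumes rr: "r \<le> r'" "r' < kk"
    and eq: "Phi (m, int kk * q + int r) = Phi (m', int kk * q' + int r')"
  shows "m = m' \<and> q = q' \<and> r = r'"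
proof -
  have rk: "r < kk" using rr by simp
  define A where "A = g [^] m \<otimes> hh [^] q"
  define B where "B = g [^] m' \<otimes> hh [^] q'"
  define B0 where "B0 = take (r' - r) (drop r L)"
  define U where "U = wv B0"
  define Z where "Z = g [^] (m - m') \<otimes> hh [^] (q - q')"
  have cA: "A \<in> carrier G" and cB: "B \<in> carrier G" and cZ: "Z \<in> carrier G"
    unfolding A_def B_def Z_def by auto
  have B0S: "set B0 \<subseteq> S" unfolding B0_def using L_S
    by (meson order.trans set_drop_subset set_take_subset)
  then have cU: "U \<in> carrier G" unfolding U_def using S_sub by auto
  have "take r' L = take r L @ B0" unfolding B0_def using take_add[of r "r' - r" L] rr by simp
  then have PU: "P r' = P r \<otimes> U" unfolding P_def U_def
    using wv_append L_carr B0S S_sub by (metis dual_order.trans set_take_subset)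
  have eq2: "A \<otimes> P r = B \<otimes> P r \<otimes> U"
    using eq Phi_eq[OF rk, of m q] Phi_eq[OF rr(2), of m' q'] PU cB cU
    unfolding A_def B_def by (simp add: m_assoc)
  have BZ: "B \<otimes> Z = A"
  proof -
    have "B \<otimes> Z = g [^] m' \<otimes> (hh [^] q' \<otimes> g [^] (m - m')) \<otimes> hh [^] (q - q')"
      unfolding B_def Z_def by (simp add: m_assoc)
    also have "hh [^] q' \<otimes> g [^] (m - m') = g [^] (m - m') \<otimes> hh [^] q'"
      using gpow_cent[of "hh [^] q'" "m - m'"] by simp
    also have "g [^] m' \<otimes> (g [^] (m - m') \<otimes> hh [^] q') \<otimes> hh [^] (q - q')
       = (g [^] m' \<otimes> g [^] (m - m')) \<otimes> (hh [^] q' \<otimes> hh [^] (q - q'))"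
      by (simp add: m_assoc)
    also have "\<dots> = A" unfolding A_def
      using int_pow_mult[OF g_carr, of m' "m - m'", symmetric] int_pow_mult[OF hh_carr, of q' "q - q'", symmetric]
      by simp
    finally show ?thesis .
  qed
  have "B \<otimes> Z \<otimes> P r = B \<otimes> (P r \<otimes> U)" using eq2 BZ cB cU by (simp add: m_assoc)
  then have "Z \<otimes> P r = P r \<otimes> U" using cB cZ cU by (simp add: m_assoc)
  then have UZ: "U = inv (P r) \<otimes> Z \<otimes> P r" using cZ cU by (simp add: m_assoc inv_solve_left)
  have c0: "q = q'"
  proof (rule ccontr)
    assume "q \<noteq> q'"
    then have "q - q' \<noteq> 0" by simp
    then have "nt (hh [^] (q - q'))" using nt_pow L_nt hh_def by simp
    then have "nt Z" unfolding Z_def by (rule nt_gmult)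
    then have ntU: "nt U" using nt_conj[of Z "P r"] UZ by simp
    show False
    proof (cases "r = r'")
      case True
      then have "U = \<one>" unfolding U_def B0_def by simp
      then show False using ntU one_not_nt by simp
    next
      case False
      have "length B0 < kk" unfolding B0_def using rr kk_def by auto
      then show False using L_min B0S ntU U_def kk_def by fastforce
    qed
  qed
  then have Zg: "Z = g [^] (m - m')" unfolding Z_def by simp
  have ec: "g [^] (m - m') \<otimes> P r = P r \<otimes> g [^] (m - m')" by (rule gpow_cent) simp
  have UH: "U = g [^] (m - m')" using UZ Zg ec by (simp add: m_assoc) (simp add: m_assoc[symmetric])
  have r0: "r = r'"
  proof (rule ccontr)
    assume "r \<noteq> r'"
    then have "B0 \<noteq> []" unfolding B0_def using rr kk_def by auto
    moreover have "L = take r L @ B0 @ drop r' L"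
      unfolding B0_def using rr by (metis append.assoc append_take_drop_id take_add le_add_diff_inverse)
    ultimately show False using remove[of "take r L" B0 "drop r' L"] UH gpow_in U_def by auto
  qed
  then have "U = \<one>" unfolding U_def B0_def by simp
  then have "g [^] (m - m') = \<one>" using UH by simp
  then have "m - m' = 0" by (rule gpow_one)
  then show ?thesis using c0 r0 by simp
qed

lemma Phi_inj: "Phi a = Phi b \<Longrightarrow> a = b"
proof -
  assume e: "Phi a = Phi b"
  obtain m n m' n' where ab: "a = (m, n)" "b = (m', n')" by (metis surj_pair)
  define r where "r = nat (n mod int kk)"
  define r' where "r' = nat (n' mod int kk)"
  define q where "q = n div int kk"
  define q' where "q' = n' div int kk"
  have n: "n = int kk * q + int r" unfolding q_def r_def by (rule ndecomp)
  have n': "n' = int kk * q' + int r'" unfolding q'_def r'_def by (rule ndecomp)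
  have rk: "r < kk" "r' < kk" unfolding r_def r'_def by (rule rlt)+
  have e2: "Phi (m, int kk * q + int r) = Phi (m', int kk * q' + int r')"
    using e ab n n' by simp
  show ?thesis
  proof (cases "r \<le> r'")
    case True
    then show ?thesis using Phi_inj_aux[OF True rk(2) e2] ab n n' by simp
  next
    case False
    then have rr: "r' \<le> r" by simp
    show ?thesis using Phi_inj_aux[OF rr rk(1) e2[symmetric]] ab n n' by simp
  qed
qed

end

context snk2 begin

lemma snake: "snake_embedding Z2 {(1, 0), (0, 1)} G (S \<union> {g}) Phi"
  unfolding snake_embedding_def
proof (intro exI conjI)
  show "inv_rev_transducer QQ {(1, 0), (0, 1)} (S \<union> {g}) 0 dl et" by (rule transducer)
  show "\<forall>k\<in>carrier Z2. \<forall>w\<in>words {(1, 0), (0, 1)}. eval_word Z2 w = k \<longrightarrow>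
      Phi k = eval_word G (tr_fun QQ 0 dl et w)"
    using main by auto
  show "\<forall>w\<in>words {(1, 0), (0, 1)}. \<forall>w'\<in>words {(1, 0), (0, 1)}.
      (eval_word G (tr_fun QQ 0 dl et w) = eval_word G (tr_fun QQ 0 dl et w')) =
      (eval_word Z2 w = eval_word Z2 w')"
    using main Phi_inj by metis
qed

end

theorem lemma2:
  fixes G :: "('g, 'c) monoid_scheme" and S :: "'g set" and g :: 'g
  assumes "group G"
    and "finite S" and "S \<subseteq> carrier G" and "generate G S = carrier G"
    and "g \<in> carrier G"
    and "\<forall>n::nat. n > 0 \<longrightarrow> g [^]\<^bsub>G\<^esub> n \<noteq> \<one>\<^bsub>G\<^esub>"
    and "\<forall>x\<in>carrier G. g \<otimes>\<^bsub>G\<^esub> x = x \<otimes>\<^bsub>G\<^esub> g"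
    and "\<not> torsion_group (G Mod generate G {g})"
  shows "\<exists>\<phi>. snake_embedding Z2 {(1, 0), (0, 1)} G (S \<union> {g}) \<phi>"
proof -
  interpret snk G g S
    unfolding snk_def snk_axioms_def using assms by auto
  interpret N: normal Hg G by (rule Hg_normal)
  obtain Xq where Xq: "Xq \<in> carrier (G Mod Hg)"
    and Xn: "\<forall>n::nat. n > 0 \<longrightarrow> Xq [^]\<^bsub>(G Mod Hg)\<^esub> n \<noteq> \<one>\<^bsub>(G Mod Hg)\<^esub>"
    using assms(8) unfolding torsion_group_def Hg_def by blast
  obtain x where x: "x \<in> carrier G" "Xq = Hg #>\<^bsub>G\<^esub> x" using Xq unfolding carrier_FactGroup by auto
  have "\<forall>n::nat. n > 0 \<longrightarrow> x [^]\<^bsub>G\<^esub> n \<notin> Hg"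
  proof (intro allI impI notI)
    fix n :: nat assume n: "n > 0" and xn: "x [^]\<^bsub>G\<^esub> n \<in> Hg"
    have "Xq [^]\<^bsub>(G Mod Hg)\<^esub> n = Hg #>\<^bsub>G\<^esub> (x [^]\<^bsub>G\<^esub> n)" using N.FactGroup_pow[OF x(1), of n] x(2) by simp
    also have "\<dots> = Hg" using coset_join2[OF _ Hg_sub xn] x(1) by simp
    finally show False using Xn n by simp
  qed
  then have ntx: "nt x" using nt_nat x(1) by blast
  obtain L0 where L0: "set L0 \<subseteq> S" "nt (wv L0)" using pos_word[OF assms(4) ntx] by blast
  obtain L where L: "set L \<subseteq> S \<and> nt (wv L)"
    and Lmin: "\<forall>L'. set L' \<subseteq> S \<and> nt (wv L') \<longrightarrow> length L \<le> length L'"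
    using ex_has_least_nat[of "\<lambda>L. set L \<subseteq> S \<and> nt (wv L)" L0 length] L0 by blast
  interpret snk2 G g S L
    unfolding snk2_def snk2_axioms_def using L Lmin snk_axioms by auto
  show ?thesis using snake by blast
qed

end
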